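(* Consider a system with a finite set $S$ of tasks, periods $\tau_X$, frame length $T=\mathrm{lcm}\{\tau_X : X\in S\}$ and per-execution rewards $r^1_X\ge r^2_X\ge\dots\ge r^{\tau_X}_X\ge 0$ (as in the context). Let $n=(n^i_X)_{X\in S,\,1\le i\le\tau_X}$ be a vector of integers satisfying $0\le n^i_X\le T/\tau_X$ for all $X\in S$, $1\le i\le \tau_X$, and $\sum_{X\in S}\sum_{i=1}^{\tau_X} n^i_X\le T$. Then there exists a scheduling policy under which the average reward of every task $X\in S$ satisfies $q_X\ge\sum_{i=1}^{\tau_X} n^i_X r^i_X$.
   Context: A system consists of a finite set $S$ of tasks. Time is slotted, $t\in\{0,1,2,\dots\}$. Each task $X\in S$ has a period $\tau_X$ (a positive integer); time is partitioned into consecutive periods of $X$ of $\tau_X$ slots each, the first starting at $t=0$. In each period, task $X$ has one job, which is removed from the system at the end of that period. Let $T$ be the least common multiple of $\{\tau_X : X\in S\}$; time is partitioned into consecutive frames of $T$ slots each, the first starting at $t=0$. A scheduling policy chooses in each time slot either to idle or to execute the job of exactly one task; a job may be executed in any number of slots within its period. Each task $X$ has rewards $r^1_X\ge r^2_X\ge\dots\ge r^{\tau_X}_X\ge 0$: when the job of $X$ is executed for the $i$-th time within a period, $X$ obtains reward $r^i_X$. Let $s_X(t)$ be the total reward obtained by $X$ between time $0$ and time $t$; the average reward of $X$ is $q_X=\liminf_{t\to\infty} s_X(t)/(t/T)$. *)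

theory Defs
  imports "HOL-Analysis.Analysis" "HOL-Library.Liminf_Limsup"
begin

text \<open>A schedule assigns to each time slot either idling (None) or one task (Some X).\<close>
type_synonym 'a schedule = "nat \<Rightarrow> 'a option"

definition valid_schedule :: "'a set \<Rightarrow> 'a schedule \<Rightarrow> bool" where
  "valid_schedule S \<sigma> \<longleftrightarrow> (\<forall>t X. \<sigma> t = Some X \<longrightarrow> X \<in> S)"

definition frame_len :: "'a set \<Rightarrow> ('a \<Rightarrow> nat) \<Rightarrow> nat" where
  "frame_len S tau = Lcm (tau ` S)"

definition exec_index :: "('a \<Rightarrow> nat) \<Rightarrow> 'a schedule \<Rightarrow> 'a \<Rightarrow> nat \<Rightarrow> nat" where
  "exec_index tau \<sigma> X t =
     card {s. (t div tau X) * tau X \<le> s \<and> s \<le> t \<and> \<sigma> s = Some X}"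

definition slot_reward ::
  "('a \<Rightarrow> nat) \<Rightarrow> ('a \<Rightarrow> nat \<Rightarrow> real) \<Rightarrow> 'a schedule \<Rightarrow> 'a \<Rightarrow> nat \<Rightarrow> real" where
  "slot_reward tau r \<sigma> X t = (if \<sigma> t = Some X then r X (exec_index tau \<sigma> X t) else 0)"

definition total_reward ::
  "('a \<Rightarrow> nat) \<Rightarrow> ('a \<Rightarrow> nat \<Rightarrow> real) \<Rightarrow> 'a schedule \<Rightarrow> 'a \<Rightarrow> nat \<Rightarrow> real" where
  "total_reward tau r \<sigma> X t = (\<Sum>s<t. slot_reward tau r \<sigma> X s)"

definition avg_reward ::
  "'a set \<Rightarrow> ('a \<Rightarrow> nat) \<Rightarrow> ('a \<Rightarrow> nat \<Rightarrow> real) \<Rightarrow> 'a schedule \<Rightarrow> 'a \<Rightarrow> ereal" where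
  "avg_reward S tau r \<sigma> X =
     liminf (\<lambda>t. ereal (total_reward tau r \<sigma> X t / (real t / real (frame_len S tau))))"

end

theory Submission
  imports Defs
begin

lemma hall:
  "finite I \<Longrightarrow> (\<forall>i\<in>I. finite (A i)) \<Longrightarrow> (\<forall>J\<subseteq>I. card J \<le> card (\<Union>(A ` J)))
   \<Longrightarrow> \<exists>f. inj_on f I \<and> (\<forall>i\<in>I. f i \<in> A i)"
proof (induction "card I" arbitrary: I A rule: less_induct)
  case less
  show ?case
  proof (cases "I = {}")
    case True then show ?thesis by auto
  next
    case nonempty: False
    show ?thesis
    proof (cases "\<exists>J. J \<subseteq> I \<and> J \<noteq> {} \<and> J \<noteq> I \<and> card (\<Union>(A`J)) = card J")
      case True
      then obtain J where J: "J \<subseteq> I" "J \<noteq> {}" "J \<noteq> I" "card (\<Union>(A`J)) = card J" by blast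
      define U where "U = \<Union>(A`J)"
      have finJ: "finite J" using J(1) less.prems(1) finite_subset by blast
      have finU: "finite U" unfolding U_def using finJ J(1) less.prems(2) by auto
      have "card J < card I" using J less.prems(1) psubset_card_mono by blast
      moreover have "\<forall>i\<in>J. finite (A i)" using J(1) less.prems(2) by auto
      moreover have "\<forall>K\<subseteq>J. card K \<le> card (\<Union>(A ` K))" using J(1) less.prems(3) by auto
      ultimately obtain f1 where f1: "inj_on f1 J" "\<forall>i\<in>J. f1 i \<in> A i"
        using less.hyps[of J A] finJ by blast
      define B where "B i = A i - U" for i
      have "card (I - J) < card I" using J less.prems(1)
        by (metis Diff_disjoint Diff_subset Int_absorb2 card_seteq finite_Diff not_le psubset_card_mono psubset_eq)
      moreover have "finite (I - J)" using less.prems(1) by auto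
      moreover have "\<forall>i\<in>I - J. finite (B i)" using less.prems(2) by (auto simp: B_def)
      moreover have "\<forall>K\<subseteq>I - J. card K \<le> card (\<Union>(B ` K))"
      proof (intro allI impI)
        fix K assume K: "K \<subseteq> I - J"
        have finK: "finite K" using K less.prems(1) finite_subset by blast
        have finBK: "finite (\<Union>(B ` K))" using finK K less.prems(2) by (auto simp: B_def)
        have eq: "\<Union>(A`(K \<union> J)) = \<Union>(B`K) \<union> U" by (auto simp: B_def U_def)
        have disj: "\<Union>(B`K) \<inter> U = {}" by (auto simp: B_def)
        have "K \<union> J \<subseteq> I" using K J(1) by auto
        then have "card (K \<union> J) \<le> card (\<Union>(A`(K \<union> J)))" using less.prems(3) by blast
        also have "\<dots> = card (\<Union>(B`K)) + card U" using eq disj finBK finU card_Un_disjoint by metis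
        finally have "card (K \<union> J) \<le> card (\<Union>(B`K)) + card J" using J(4) U_def by simp
        moreover have "card (K \<union> J) = card K + card J"
          using K finK finJ by (subst card_Un_disjoint) auto
        ultimately show "card K \<le> card (\<Union>(B ` K))" by simp
      qed
      ultimately obtain f2 where f2: "inj_on f2 (I - J)" "\<forall>i\<in>I - J. f2 i \<in> B i"
        using less.hyps[of "I - J" B] by blast
      define f where "f i = (if i \<in> J then f1 i else f2 i)" for i
      have "inj_on f I"
      proof (rule inj_onI)
        fix x y assume xy: "x \<in> I" "y \<in> I" "f x = f y"
        show "x = y"
        proof (cases "x \<in> J"; cases "y \<in> J")
          assume "x \<in> J" "y \<in> J" then show ?thesis using xy f1 by (auto simp: f_def inj_on_def)
        next
          assume "x \<notin> J" "y \<notin> J" then show ?thesis using xy f2 by (auto simp: f_def inj_on_def)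
        next
          assume a: "x \<in> J" "y \<notin> J"
          then have "f x \<in> U" using f1 by (auto simp: f_def U_def)
          moreover have "f y \<notin> U" using a f2(2) xy(2) unfolding f_def B_def by simp
          ultimately show ?thesis using xy by simp
        next
          assume a: "x \<notin> J" "y \<in> J"
          then have "f y \<in> U" using f1 by (auto simp: f_def U_def)
          moreover have "f x \<notin> U" using a f2(2) xy(1) unfolding f_def B_def by simp
          ultimately show ?thesis using xy by simp
        qed
      qed
      moreover have "\<forall>i\<in>I. f i \<in> A i" using f1 f2 by (auto simp: f_def B_def)
      ultimately show ?thesis by blast
    next
      case False
      obtain i0 where i0: "i0 \<in> I" using nonempty by blast
      have "card {i0} \<le> card (A i0)" using less.prems(3) i0
        by (metis cSup_singleton image_empty image_insert empty_subsetI insert_subset)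
      then have "A i0 \<noteq> {}" by auto
      then obtain x where x: "x \<in> A i0" by blast
      define B where "B i = A i - {x}" for i
      have "card (I - {i0}) < card I" using i0 less.prems(1) by (metis card_Diff1_less)
      moreover have "finite (I - {i0})" using less.prems(1) by auto
      moreover have "\<forall>i\<in>I - {i0}. finite (B i)" using less.prems(2) by (auto simp: B_def)
      moreover have "\<forall>K\<subseteq>I - {i0}. card K \<le> card (\<Union>(B ` K))"
      proof (intro allI impI)
        fix K assume K: "K \<subseteq> I - {i0}"
        show "card K \<le> card (\<Union>(B ` K))"
        proof (cases "K = {}")
          case True then show ?thesis by simp
        next
          case Kne: False
          have finK: "finite K" using K less.prems(1) finite_subset by blast
          have finAK: "finite (\<Union>(A ` K))" using finK K less.prems(2) by auto
          have "K \<noteq> I" using K i0 by auto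
          then have "card (\<Union>(A`K)) \<noteq> card K" using False K Kne by auto
          moreover have "card K \<le> card (\<Union>(A`K))" using K less.prems(3) by auto
          ultimately have "card K + 1 \<le> card (\<Union>(A`K))" by simp
          moreover have "\<Union>(B ` K) = \<Union>(A`K) - {x}" by (auto simp: B_def)
          moreover have "card (\<Union>(A`K) - {x}) \<ge> card (\<Union>(A`K)) - 1"
            using finAK by (metis card_Diff_singleton_if diff_le_self order_refl)
          ultimately show ?thesis by simp
        qed
      qed
      ultimately obtain f2 where f2: "inj_on f2 (I - {i0})" "\<forall>i\<in>I - {i0}. f2 i \<in> B i"
        using less.hyps[of "I - {i0}" B] by blast
      define f where "f i = (if i = i0 then x else f2 i)" for i
      have "inj_on f I" using f2 by (auto simp: f_def inj_on_def B_def)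
      moreover have "\<forall>i\<in>I. f i \<in> A i" using f2 x by (auto simp: f_def B_def)
      ultimately show ?thesis by blast
    qed
  qed
qed


lemma frac_hall:
  fixes w :: "'l \<Rightarrow> 'r \<Rightarrow> nat"
  assumes fL: "finite L" and fN: "\<forall>v\<in>L. finite (Nb v)"
    and out: "\<forall>v\<in>L. (\<Sum>r\<in>Nb v. w v r) = c"
    and inn: "\<forall>r\<in>\<Union>(Nb ` L). (\<Sum>v\<in>L. w v r) \<le> c" and cpos: "c > 0"
  shows "\<forall>J\<subseteq>L. card J \<le> card (\<Union>(Nb ` J))"
proof (intro allI impI)
  fix J assume J: "J \<subseteq> L"
  define U where "U = \<Union>(Nb ` J)"
  have fJ: "finite J" using J fL finite_subset by blast
  have fU: "finite U" unfolding U_def using fJ J fN by auto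
  have "(\<Sum>v\<in>J. \<Sum>r\<in>Nb v. w v r) = (\<Sum>v\<in>J. c)" using out J by (intro sum.cong) auto
  then have "c * card J = (\<Sum>v\<in>J. \<Sum>r\<in>Nb v. w v r)" by simp
  also have "\<dots> \<le> (\<Sum>v\<in>J. \<Sum>r\<in>U. w v r)"
    by (rule sum_mono, rule sum_mono2) (use fU U_def in auto)
  also have "\<dots> = (\<Sum>r\<in>U. \<Sum>v\<in>J. w v r)" by (rule sum.swap)
  also have "\<dots> \<le> (\<Sum>r\<in>U. \<Sum>v\<in>L. w v r)"
    by (rule sum_mono, rule sum_mono2) (use fL J in auto)
  also have "\<dots> \<le> (\<Sum>r\<in>U. c)"
    by (rule sum_mono) (use inn J U_def in auto)
  also have "\<dots> = c * card U" by simp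
  finally show "card J \<le> card (\<Union>(Nb ` J))" using cpos U_def by simp
qed

lemma rmono:
  fixes r :: "nat \<Rightarrow> real"
  assumes "\<forall>i. 1 \<le> i \<and> i < tau \<longrightarrow> r (Suc i) \<le> r i"
  shows "1 \<le> i \<Longrightarrow> i \<le> j \<Longrightarrow> j \<le> tau \<Longrightarrow> r j \<le> r i"
proof (induction j)
  case 0 then show ?case by simp
next
  case (Suc j)
  show ?case
  proof (cases "i = Suc j")
    case True then show ?thesis by simp
  next
    case False
    then have "i \<le> j" using Suc by simp
    then have "r j \<le> r i" using Suc by simp
    moreover have "r (Suc j) \<le> r j" using assms Suc \<open>i \<le> j\<close> by auto
    ultimately show ?thesis by simp
  qed
qed

lemma key:
  fixes r :: "nat \<Rightarrow> real" and n :: "nat \<Rightarrow> nat" and c :: "nat \<Rightarrow> nat"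
  assumes mpos: "m > 0"
    and mono: "\<forall>i. 1 \<le> i \<and> i < tau \<longrightarrow> r (Suc i) \<le> r i"
    and nonneg: "\<forall>i. 1 \<le> i \<and> i \<le> tau \<longrightarrow> 0 \<le> r i"
    and nb: "\<forall>i. 1 \<le> i \<and> i \<le> tau \<longrightarrow> n i \<le> m"
    and N: "N = (\<Sum>i=1..tau. n i)"
    and cq: "\<forall>p<m. N div m \<le> c p \<and> c p \<le> tau"
    and cs: "N mod m \<le> card {p. p < m \<and> N div m < c p}"
  shows "(\<Sum>i=1..tau. real (n i) * r i) \<le> (\<Sum>p<m. \<Sum>i=1..c p. r i)"
proof -
  define q where "q = N div m"
  define s where "s = N mod m"
  have Nqs: "N = q * m + s" by (simp add: q_def s_def)
  have "N \<le> (\<Sum>i=1..tau. m)" unfolding N by (rule sum_mono) (use nb in auto)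
  then have Nle: "N \<le> tau * m" by simp
  then have "q \<le> tau * m div m" unfolding q_def by (rule div_le_mono)
  then have qle: "q \<le> tau" using mpos by simp
  have s0: "q = tau \<Longrightarrow> s = 0" using Nle Nqs by (simp add: algebra_simps)
  define cc where "cc = (if q < tau then r (Suc q) else 0)"
  have cc0: "0 \<le> cc" using nonneg by (auto simp: cc_def)
  have cc_le: "\<And>i. 1 \<le> i \<Longrightarrow> i \<le> q \<Longrightarrow> cc \<le> r i"
    using rmono[OF mono] nonneg qle by (auto simp: cc_def)
  have cc_ge: "\<And>i. q < i \<Longrightarrow> i \<le> tau \<Longrightarrow> r i \<le> cc"
    using rmono[OF mono] by (auto simp: cc_def)
  have "(\<Sum>i=1..tau. real (n i) * r i) \<le>
        (\<Sum>i=1..tau. (if i \<le> q then real m * r i - real m * cc else 0) + real (n i) * cc)"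
  proof (rule sum_mono)
    fix i assume i: "i \<in> {1..tau}"
    show "real (n i) * r i \<le> (if i \<le> q then real m * r i - real m * cc else 0) + real (n i) * cc"
    proof (cases "i \<le> q")
      case True
      have "real (n i) \<le> real m" using nb i by auto
      moreover have "cc \<le> r i" using cc_le True i by auto
      ultimately have "(real m - real (n i)) * cc \<le> (real m - real (n i)) * r i"
        by (intro mult_left_mono) auto
      then show ?thesis using True by (simp add: algebra_simps)
    next
      case False
      then show ?thesis using cc_ge[of i] i by (auto intro: mult_left_mono)
    qed
  qed
  also have "\<dots> = (\<Sum>i=1..tau. (if i \<le> q then real m * r i - real m * cc else 0)) + real N * cc"
    by (simp add: sum.distrib N sum_distrib_right)
  also have "(\<Sum>i=1..tau. (if i \<le> q then real m * r i - real m * cc else 0))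
     = (\<Sum>i=1..q. real m * r i - real m * cc)"
  proof -
    have "(\<Sum>i=1..tau. (if i \<le> q then real m * r i - real m * cc else 0))
        = (\<Sum>i\<in>{1..tau} \<inter> {i. i \<le> q}. real m * r i - real m * cc)"
      by (simp add: sum.inter_restrict)
    also have "{1..tau} \<inter> {i. i \<le> q} = {1..q}" using qle by auto
    finally show ?thesis .
  qed
  also have "(\<Sum>i=1..q. real m * r i - real m * cc) = real m * (\<Sum>i=1..q. r i) - real q * real m * cc"
    by (simp add: sum_subtractf sum_distrib_left)
  finally have L: "(\<Sum>i=1..tau. real (n i) * r i) \<le> real m * (\<Sum>i=1..q. r i) + real s * cc"
    using Nqs by (simp add: algebra_simps)
  have P: "(\<Sum>i=1..q. r i) + (if q < c p then cc else 0) \<le> (\<Sum>i=1..c p. r i)" if p: "p < m" for p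
  proof -
    have qc: "q \<le> c p" "c p \<le> tau" using cq p q_def by auto
    have split: "(\<Sum>i=1..c p. r i) = (\<Sum>i=1..q. r i) + (\<Sum>i=Suc q..c p. r i)"
      using sum.ub_add_nat[of 1 q r "c p - q"] qc by simp
    have "(if q < c p then cc else 0) \<le> (\<Sum>i=Suc q..c p. r i)"
    proof (cases "q < c p")
      case True
      then have "{Suc q..c p} = insert (Suc q) {Suc (Suc q)..c p}" by auto
      then have "(\<Sum>i=Suc q..c p. r i) = r (Suc q) + (\<Sum>i=Suc (Suc q)..c p. r i)" by simp
      moreover have "0 \<le> (\<Sum>i=Suc (Suc q)..c p. r i)" using nonneg qc by (intro sum_nonneg) auto
      moreover have "cc = r (Suc q)" using True qc by (simp add: cc_def)
      ultimately show ?thesis using True by simp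
    next
      case False
      then show ?thesis using nonneg qc by (auto intro: sum_nonneg)
    qed
    then show ?thesis using split by simp
  qed
  have "real m * (\<Sum>i=1..q. r i) + real s * cc \<le>
        (\<Sum>p<m. (\<Sum>i=1..q. r i) + (if q < c p then cc else 0))"
  proof -
    have "(\<Sum>p<m. (if q < c p then cc else 0)) = (\<Sum>p\<in>{..<m} \<inter> {p. q < c p}. cc)"
      using sum.inter_restrict[of "{..<m}" "\<lambda>_. cc" "{p. q < c p}"] by simp
    also have "\<dots> = real (card ({..<m} \<inter> {p. q < c p})) * cc" by (rule sum_constant)
    also have "{..<m} \<inter> {p. q < c p} = {p. p < m \<and> N div m < c p}" by (auto simp: q_def)
    finally have "(\<Sum>p<m. (if q < c p then cc else 0)) = real (card {p. p < m \<and> N div m < c p}) * cc" .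
    moreover have "real s * cc \<le> real (card {p. p < m \<and> N div m < c p}) * cc"
      using cs cc0 by (intro mult_right_mono) (auto simp: s_def)
    ultimately show ?thesis by (simp add: sum.distrib)
  qed
  also have "\<dots> \<le> (\<Sum>p<m. \<Sum>i=1..c p. r i)" by (rule sum_mono) (use P in auto)
  finally show ?thesis using L by linarith
qed


lemma slot_reward_nonneg:
  assumes tpos: "tau X > 0" and nn: "\<forall>i. 1 \<le> i \<and> i \<le> tau X \<longrightarrow> 0 \<le> r X i"
  shows "0 \<le> slot_reward tau r \<sigma> X t"
proof (cases "\<sigma> t = Some X")
  case True
  define A where "A = {s. (t div tau X) * tau X \<le> s \<and> s \<le> t \<and> \<sigma> s = Some X}"
  have sub: "A \<subseteq> {(t div tau X) * tau X..t}" by (auto simp: A_def)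
  have "t \<in> A" using True by (auto simp: A_def)
  moreover have fA: "finite A" using sub finite_subset by blast
  ultimately have "1 \<le> card A" by (metis One_nat_def Suc_leI card_gt_0_iff empty_iff)
  moreover have "card A \<le> card {(t div tau X) * tau X..t}" using sub by (intro card_mono) auto
  moreover have "card {(t div tau X) * tau X..t} = t mod tau X + 1"
    by (simp add: minus_div_mult_eq_mod [symmetric] Suc_diff_le div_times_less_eq_dividend)
  moreover have "t mod tau X < tau X" using tpos by simp
  ultimately have "1 \<le> card A \<and> card A \<le> tau X" by linarith
  then show ?thesis using True nn by (simp add: slot_reward_def exec_index_def A_def[symmetric])
next
  case False then show ?thesis by (simp add: slot_reward_def)
qed

lemma period_reward:
  assumes tpos: "tau X > 0"
  shows "j \<le> tau X \<Longrightarrow> (\<Sum>t\<in>{P*tau X..<P*tau X+j}. slot_reward tau r \<sigma> X t)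
     = (\<Sum>i=1..card {t\<in>{P*tau X..<P*tau X+j}. \<sigma> t = Some X}. r X i)"
proof (induction j)
  case 0 then show ?case by simp
next
  case (Suc j)
  define t0 where "t0 = P * tau X + j"
  have j: "j < tau X" using Suc by simp
  have d: "t0 div tau X = P" using j tpos by (simp add: t0_def)
  have iv: "{P*tau X..<P*tau X+Suc j} = insert t0 {P*tau X..<P*tau X+j}" by (auto simp: t0_def)
  have IH: "(\<Sum>t\<in>{P*tau X..<P*tau X+j}. slot_reward tau r \<sigma> X t)
     = (\<Sum>i=1..card {t\<in>{P*tau X..<P*tau X+j}. \<sigma> t = Some X}. r X i)" using Suc j by simp
  define C where "C = {t\<in>{P*tau X..<P*tau X+j}. \<sigma> t = Some X}"
  have fC: "finite C" by (simp add: C_def)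
  have t0C: "t0 \<notin> C" by (simp add: C_def t0_def)
  show ?case
  proof (cases "\<sigma> t0 = Some X")
    case True
    have set: "{t\<in>{P*tau X..<P*tau X+Suc j}. \<sigma> t = Some X} = insert t0 C"
      using True by (auto simp: C_def iv t0_def)
    have ex: "{s. (t0 div tau X) * tau X \<le> s \<and> s \<le> t0 \<and> \<sigma> s = Some X} = insert t0 C"
      using True unfolding d by (auto simp: C_def t0_def)
    have "slot_reward tau r \<sigma> X t0 = r X (Suc (card C))"
      using True fC t0C by (simp add: slot_reward_def exec_index_def ex)
    moreover have "(\<Sum>t\<in>{P*tau X..<P*tau X+Suc j}. slot_reward tau r \<sigma> X t)
       = slot_reward tau r \<sigma> X t0 + (\<Sum>t\<in>{P*tau X..<P*tau X+j}. slot_reward tau r \<sigma> X t)"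
      unfolding iv by (rule sum.insert) (auto simp: t0_def)
    moreover have "card (insert t0 C) = Suc (card C)" using fC t0C by simp
    moreover have "(\<Sum>i=1..Suc (card C). r X i) = (\<Sum>i=1..card C. r X i) + r X (Suc (card C))"
      by simp
    ultimately show ?thesis using IH unfolding set C_def[symmetric] by simp
  next
    case False
    have set: "{t\<in>{P*tau X..<P*tau X+Suc j}. \<sigma> t = Some X} = C"
      using False unfolding C_def iv t0_def by (auto simp: less_Suc_eq)
    have "slot_reward tau r \<sigma> X t0 = 0" using False by (simp add: slot_reward_def)
    moreover have "(\<Sum>t\<in>{P*tau X..<P*tau X+Suc j}. slot_reward tau r \<sigma> X t)
       = slot_reward tau r \<sigma> X t0 + (\<Sum>t\<in>{P*tau X..<P*tau X+j}. slot_reward tau r \<sigma> X t)"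
      unfolding iv by (rule sum.insert) (auto simp: t0_def)
    ultimately show ?thesis using IH unfolding set C_def[symmetric] by simp
  qed
qed

lemma total_frames:
  fixes X :: 'a
  assumes tpos: "tau X > 0" and T: "T = m * tau X" and mpos: "m > 0"
    and mono: "\<forall>i. 1 \<le> i \<and> i < tau X \<longrightarrow> r X (Suc i) \<le> r X i"
    and nonneg: "\<forall>i. 1 \<le> i \<and> i \<le> tau X \<longrightarrow> 0 \<le> r X i"
    and nb: "\<forall>i. 1 \<le> i \<and> i \<le> tau X \<longrightarrow> n i \<le> m"
    and NN: "NN = (\<Sum>i=1..tau X. n i)"
    and cnt: "\<forall>P. cnt P = card {t\<in>{P*tau X..<P*tau X+tau X}. \<sigma> t = Some X}"
    and cq: "\<forall>f p. p < m \<longrightarrow> NN div m \<le> cnt (f*m+p) \<and> cnt (f*m+p) \<le> tau X"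
    and cs: "\<forall>f. NN mod m \<le> card {p. p < m \<and> NN div m < cnt (f*m+p)}"
  shows "real k * (\<Sum>i=1..tau X. real (n i) * r X i) \<le> total_reward tau r \<sigma> X (k*T)"
proof -
  define G where "G = (\<Sum>i=1..tau X. real (n i) * r X i)"
  define h where "h P = (\<Sum>i=1..cnt P. r X i)" for P
  have "total_reward tau r \<sigma> X (k*T) = (\<Sum>t<(k*m)*tau X. slot_reward tau r \<sigma> X t)"
    by (simp add: total_reward_def T mult.assoc)
  also have "\<dots> = (\<Sum>P<k*m. \<Sum>t\<in>{P*tau X..<P*tau X+tau X}. slot_reward tau r \<sigma> X t)"
    by (rule sum.nat_group[symmetric])
  also have "\<dots> = (\<Sum>P<k*m. h P)"
    by (rule sum.cong) (simp_all add: h_def cnt period_reward[where tau=tau and X=X, OF tpos])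
  also have "\<dots> = (\<Sum>f<k. \<Sum>P\<in>{f*m..<f*m+m}. h P)"
    by (rule sum.nat_group[symmetric])
  also have "\<dots> \<ge> (\<Sum>f<k. G)"
  proof (rule sum_mono)
    fix f assume "f \<in> {..<k}"
    have "(\<Sum>P\<in>{f*m..<f*m+m}. h P) = (\<Sum>p\<in>{0..<m}. h (p + f*m))"
      using sum.shift_bounds_nat_ivl[of h 0 "f*m" m] by (simp add: add.commute)
    also have "\<dots> = (\<Sum>p<m. \<Sum>i=1..cnt (f*m+p). r X i)"
      by (simp add: h_def atLeast0LessThan add.commute)
    also have "\<dots> \<ge> G" unfolding G_def
      by (rule key[OF mpos mono nonneg nb NN]) (use cq cs in auto)
    finally show "G \<le> (\<Sum>P\<in>{f*m..<f*m+m}. h P)" .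
  qed
  finally show ?thesis by (simp add: G_def)
qed

lemma liminf_bound:
  fixes s :: "nat \<Rightarrow> real"
  assumes Tpos: "T > 0" and G: "G \<ge> 0" and fr: "\<forall>k. real k * G \<le> s (k*T)"
    and mon: "\<forall>a b. a \<le> b \<longrightarrow> s a \<le> s b"
  shows "ereal G \<le> liminf (\<lambda>t. ereal (s t / (real t / real T)))"
proof -
  define g where "g t = G * (1 - real T / real t)" for t
  have lim: "(\<lambda>t. ereal (g t)) \<longlonglongrightarrow> ereal G"
  proof -
    have "(\<lambda>t. real T / real t) \<longlonglongrightarrow> 0" by (rule lim_const_over_n)
    then have "g \<longlonglongrightarrow> G * (1 - 0)" unfolding g_def by (intro tendsto_intros)
    then show ?thesis by (simp add: tendsto_ereal)
  qed
  have ev: "eventually (\<lambda>t. ereal (g t) \<le> ereal (s t / (real t / real T))) sequentially"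
    unfolding eventually_sequentially
  proof (intro exI allI impI)
    fix t :: nat assume t1: "1 \<le> t"
    define k where "k = t div T"
    have "real (k * T) \<le> real t" by (simp add: k_def div_times_less_eq_dividend del: of_nat_mult)
    have kT: "real t - real T \<le> real k * real T"
    proof -
      have "t < k*T + T" using Tpos by (simp add: k_def) (metis add.commute div_mult_mod_eq mod_less_divisor nat_add_left_cancel_less)
      then have "real t < real k * real T + real T" by (metis of_nat_add of_nat_mult of_nat_less_iff)
      then show ?thesis by linarith
    qed
    have "s (k*T) \<le> s t" using mon by (simp add: k_def div_times_less_eq_dividend)
    then have "real k * G \<le> s t" using fr by (meson order_trans)
    have tpos: "real t > 0" using t1 by simp
    have "g t = G * (real t - real T) / real t" using tpos by (simp add: g_def field_simps)
    also have "\<dots> \<le> G * (real k * real T) / real t"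
      using kT G tpos by (intro divide_right_mono mult_left_mono) auto
    also have "\<dots> = (real k * G) / (real t / real T)" using Tpos by (simp add: field_simps)
    also have "\<dots> \<le> s t / (real t / real T)"
      using \<open>real k * G \<le> s t\<close> tpos Tpos by (intro divide_right_mono) auto
    finally show "ereal (g t) \<le> ereal (s t / (real t / real T))" by simp
  qed
  have "ereal G = liminf (\<lambda>t. ereal (g t))"
    using lim_imp_Liminf[OF trivial_limit_sequentially lim] by simp
  also have "\<dots> \<le> liminf (\<lambda>t. ereal (s t / (real t / real T)))"
    by (rule Liminf_mono[OF ev])
  finally show ?thesis .
qed

theorem theorem3:
  fixes S :: "'a set" and tau :: "'a \<Rightarrow> nat"
    and r :: "'a \<Rightarrow> nat \<Rightarrow> real" and n :: "'a \<Rightarrow> nat \<Rightarrow> nat"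
  assumes "finite S"
    and "\<forall>X\<in>S. tau X > 0"
    and "\<forall>X\<in>S. \<forall>i. 1 \<le> i \<and> i < tau X \<longrightarrow> r X (Suc i) \<le> r X i"
    and "\<forall>X\<in>S. \<forall>i. 1 \<le> i \<and> i \<le> tau X \<longrightarrow> 0 \<le> r X i"
    and "\<forall>X\<in>S. \<forall>i. 1 \<le> i \<and> i \<le> tau X \<longrightarrow>
           real (n X i) \<le> real (frame_len S tau) / real (tau X)"
    and "(\<Sum>X\<in>S. \<Sum>i=1..tau X. n X i) \<le> frame_len S tau"
  shows "\<exists>\<sigma>. valid_schedule S \<sigma> \<and>
           (\<forall>X\<in>S. avg_reward S tau r \<sigma> X \<ge> ereal (\<Sum>i=1..tau X. real (n X i) * r X i))"
proof -
  note fS = assms(1) and tpos = assms(2) and mono = assms(3) and nonneg = assms(4)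
  define T where "T = frame_len S tau"
  have "Lcm (tau ` S) \<noteq> 0" using fS tpos Lcm_0_iff_nat[of "tau ` S"] by fastforce
  then have Tpos: "T > 0" by (simp add: T_def frame_len_def)
  have dvd: "tau X dvd T" if "X \<in> S" for X using that by (simp add: T_def frame_len_def dvd_Lcm)
  define m where "m X = T div tau X" for X
  have mT: "m X * tau X = T" if "X \<in> S" for X using dvd[OF that] by (simp add: m_def)
  have mpos: "m X > 0" if "X \<in> S" for X using mT[OF that] Tpos by (metis gr0I mult_is_0)
  define NN where "NN X = (\<Sum>i=1..tau X. n X i)" for X
  define q where "q X = NN X div m X" for X
  define s where "s X = NN X mod m X" for X
  have NNqs: "NN X = q X * m X + s X" for X by (simp add: q_def s_def)
  have sm: "s X < m X" if "X \<in> S" for X using mpos[OF that] by (simp add: s_def)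
  have nb: "\<forall>i. 1 \<le> i \<and> i \<le> tau X \<longrightarrow> n X i \<le> m X" if X: "X \<in> S" for X
  proof (intro allI impI)
    fix i assume i: "1 \<le> i \<and> i \<le> tau X"
    have "real (n X i) \<le> real T / real (tau X)" using assms(5) X i by (simp add: T_def)
    also have "\<dots> = real (m X)" using mT[OF X] tpos X
      by (metis nonzero_mult_div_cancel_right of_nat_0_less_iff of_nat_mult less_irrefl)
    finally show "n X i \<le> m X" by simp
  qed
  have sumNN: "(\<Sum>X\<in>S. NN X) \<le> T" using assms(6) by (simp add: NN_def T_def)
  define L where "L = (SIGMA X:S. SIGMA p:{..<m X}. {..q X})"
  define Nb :: "'a \<times> nat \<times> nat \<Rightarrow> (nat + 'a \<times> nat) set" where
    "Nb v = (case v of (X,p,k) \<Rightarrow> Inl ` {p*tau X..<p*tau X+tau X} \<union>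
               (if k = q X then Inr ` ({X} \<times> {..<m X - s X}) else {}))" for v
  define w :: "'a \<times> nat \<times> nat \<Rightarrow> (nat + 'a \<times> nat) \<Rightarrow> nat" where
    "w v rr = (case v of (X,p,k) \<Rightarrow> (case rr of
        Inl t \<Rightarrow> (if p*tau X \<le> t \<and> t < p*tau X+tau X then (if k < q X then m X else s X) else 0)
      | Inr yj \<Rightarrow> (if fst yj = X \<and> snd yj < m X - s X \<and> k = q X then tau X else 0)))" for v rr
  have fL: "finite L" using fS by (auto simp: L_def intro!: finite_SigmaI)
  have fN: "\<forall>v\<in>L. finite (Nb v)" by (auto simp: Nb_def)
  have sumL: "sum f L = (\<Sum>X\<in>S. \<Sum>p<m X. \<Sum>k\<le>q X. f (X,p,k))" for f :: "_ \<Rightarrow> nat"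
    unfolding L_def using fS by (simp add: sum.Sigma)
  have out: "\<forall>v\<in>L. (\<Sum>rr\<in>Nb v. w v rr) = T"
  proof
    fix v assume "v \<in> L"
    then obtain X p k where v: "v = (X,p,k)" and X: "X \<in> S" and p: "p < m X" and k: "k \<le> q X"
      by (auto simp: L_def)
    define I where "I = {p*tau X..<p*tau X+tau X}"
    define B where "B = (if k = q X then Inr ` ({X} \<times> {..<m X - s X}) else ({} :: (nat + 'a \<times> nat) set))"
    have NbE: "Nb v = Inl ` I \<union> B" by (simp add: Nb_def v I_def B_def)
    have disj: "Inl ` I \<inter> B = {}" by (auto simp: B_def)
    have fB: "finite B" by (simp add: B_def)
    have sA: "(\<Sum>rr\<in>Inl ` I. w v rr) = tau X * (if k < q X then m X else s X)"
    proof -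
      have "(\<Sum>rr\<in>Inl ` I. w v rr) = (\<Sum>t\<in>I. w v (Inl t))"
        by (subst sum.reindex) (auto simp: inj_on_def)
      also have "\<dots> = (\<Sum>t\<in>I. (if k < q X then m X else s X))"
        by (rule sum.cong) (auto simp: w_def v I_def)
      finally show ?thesis by (simp add: I_def)
    qed
    have sB: "(\<Sum>rr\<in>B. w v rr) = (if k = q X then (m X - s X) * tau X else 0)"
    proof (cases "k = q X")
      case True
      have "(\<Sum>rr\<in>B. w v rr) = (\<Sum>yj\<in>{X} \<times> {..<m X - s X}. w v (Inr yj))"
      proof -
        have "B = Inr ` ({X} \<times> {..<m X - s X})" using True by (simp add: B_def)
        then show ?thesis by (simp add: sum.reindex inj_on_def)
      qed
      also have "\<dots> = (\<Sum>yj\<in>{X} \<times> {..<m X - s X}. tau X)"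
        by (rule sum.cong) (auto simp: w_def v True)
      finally show ?thesis using True by simp
    next
      case False then show ?thesis by (simp add: B_def)
    qed
    have "(\<Sum>rr\<in>Nb v. w v rr) = (\<Sum>rr\<in>Inl ` I. w v rr) + (\<Sum>rr\<in>B. w v rr)"
      unfolding NbE by (rule sum.union_disjoint[OF _ fB disj]) (simp add: I_def)
    also have "\<dots> = T"
    proof (cases "k < q X")
      case True then show ?thesis using sA sB mT[OF X] by (simp add: mult.commute)
    next
      case False
      then have "k = q X" using k by simp
      then have "tau X * s X + (m X - s X) * tau X = m X * tau X"
        using sm[OF X] by (simp add: algebra_simps diff_mult_distrib)
      then show ?thesis using sA sB mT[OF X] False \<open>k = q X\<close> by simp
    qed
    finally show "(\<Sum>rr\<in>Nb v. w v rr) = T" .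
  qed
  have inn: "(\<Sum>v\<in>L. w v rr) \<le> T" for rr
  proof (cases rr)
    case (Inl t)
    have "(\<Sum>v\<in>L. w v rr) = (\<Sum>X\<in>S. \<Sum>p<m X. \<Sum>k\<le>q X. w (X,p,k) (Inl t))" by (simp add: sumL Inl)
    also have "\<dots> \<le> (\<Sum>X\<in>S. NN X)"
    proof (rule sum_mono)
      fix X assume X: "X \<in> S"
      have "(\<Sum>k\<le>q X. w (X,p,k) (Inl t)) = (if p = t div tau X then NN X else 0)" for p
      proof -
        have iff: "(p*tau X \<le> t \<and> t < p*tau X+tau X) = (p = t div tau X)"
          using tpos X by (metis add.commute div_nat_eqI div_times_less_eq_dividend
              less_mult_imp_div_less mult.commute mult_Suc dividend_less_times_div)
        have "(\<Sum>k\<le>q X. (if k < q X then m X else s X)) = q X * m X + s X"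
        proof -
          have "{..q X} = insert (q X) {..<q X}" by auto
          then have "(\<Sum>k\<le>q X. (if k < q X then m X else s X))
              = s X + (\<Sum>k<q X. (if k < q X then m X else s X))" by simp
          also have "(\<Sum>k<q X. (if k < q X then m X else s X)) = (\<Sum>k<q X. m X)" by (rule sum.cong) auto
          finally show ?thesis by simp
        qed
        then show ?thesis using iff by (auto simp: w_def NNqs)
      qed
      then have "(\<Sum>p<m X. \<Sum>k\<le>q X. w (X,p,k) (Inl t)) = (\<Sum>p<m X. if p = t div tau X then NN X else 0)"
        by simp
      also have "\<dots> \<le> NN X" by (simp add: sum.delta')
      finally show "(\<Sum>p<m X. \<Sum>k\<le>q X. w (X,p,k) (Inl t)) \<le> NN X" .
    qed
    also have "\<dots> \<le> T" by (rule sumNN)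
    finally show ?thesis .
  next
    case (Inr yj)
    have "(\<Sum>v\<in>L. w v rr) = (\<Sum>X\<in>S. \<Sum>p<m X. \<Sum>k\<le>q X. w (X,p,k) (Inr yj))" by (simp add: sumL Inr)
    also have "\<dots> \<le> (\<Sum>X\<in>S. if X = fst yj then T else 0)"
    proof (rule sum_mono)
      fix X assume X: "X \<in> S"
      have "(\<Sum>k\<le>q X. w (X,p,k) (Inr yj)) \<le> (if X = fst yj then tau X else 0)" for p
      proof -
        have "(\<Sum>k\<le>q X. w (X,p,k) (Inr yj)) = (\<Sum>k\<le>q X. if k = q X then (if fst yj = X \<and> snd yj < m X - s X then tau X else 0) else 0)"
          by (rule sum.cong) (auto simp: w_def)
        also have "\<dots> = (if fst yj = X \<and> snd yj < m X - s X then tau X else 0)" by (simp add: sum.delta')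
        finally show ?thesis by auto
      qed
      then have "(\<Sum>p<m X. \<Sum>k\<le>q X. w (X,p,k) (Inr yj)) \<le> (\<Sum>p<m X. if X = fst yj then tau X else 0)"
        by (intro sum_mono) auto
      also have "\<dots> = (if X = fst yj then T else 0)" using mT[OF X] by auto
      finally show "(\<Sum>p<m X. \<Sum>k\<le>q X. w (X,p,k) (Inr yj)) \<le> (if X = fst yj then T else 0)" .
    qed
    also have "\<dots> \<le> T" using fS by (simp add: sum.delta')
    finally show ?thesis .
  qed
  have "\<forall>J\<subseteq>L. card J \<le> card (\<Union>(Nb ` J))"
    by (rule frac_hall[OF fL fN out _ Tpos]) (use inn in auto)
  then obtain g where ginj: "inj_on g L" and gN: "\<forall>v\<in>L. g v \<in> Nb v"
    using hall[OF fL fN] by blast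
  define \<sigma>0 where "\<sigma>0 t = (if \<exists>v\<in>L. g v = Inl t then Some (fst (THE v. v \<in> L \<and> g v = Inl t)) else None)" for t
  have sig0: "\<sigma>0 t = Some (fst v)" if "v \<in> L" "g v = Inl t" for v t
  proof -
    have "(THE v'. v' \<in> L \<and> g v' = Inl t) = v" using that ginj by (intro the_equality) (auto simp: inj_on_def)
    then show ?thesis using that by (auto simp: \<sigma>0_def)
  qed
  have sig0S: "X \<in> S" if h: "\<sigma>0 t = Some X" for t X
  proof -
    obtain v where v: "v \<in> L" "g v = Inl t" using h by (auto simp: \<sigma>0_def split: if_splits)
    then have "X = fst v" using h sig0 by auto
    with v(1) show "X \<in> S" by (auto simp: L_def)
  qed
  define \<sigma> where "\<sigma> t = \<sigma>0 (t mod T)" for t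
  have valid: "valid_schedule S \<sigma>" using sig0S by (auto simp: valid_schedule_def \<sigma>_def)
  have gInl: "\<exists>t. g (X,p,k) = Inl t" if "X \<in> S" "p < m X" "k < q X" for X p k
  proof -
    have "(X,p,k) \<in> L" using that by (auto simp: L_def)
    then have "g (X,p,k) \<in> Nb (X,p,k)" using gN by blast
    then show ?thesis using that by (auto simp: Nb_def)
  qed
  have gIv: "p * tau X \<le> t \<and> t < p * tau X + tau X" if "(X,p,k) \<in> L" "g (X,p,k) = Inl t" for X p k t
  proof -
    have "g (X,p,k) \<in> Nb (X,p,k)" using gN that(1) by blast
    then show ?thesis using that(2) by (auto simp: Nb_def split: if_splits)
  qed
  have gInr: "g (X,p,q X) \<in> Inr ` ({X} \<times> {..<m X - s X})" if "X \<in> S" "p < m X" "\<not> isl (g (X,p,q X))" for X p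
  proof -
    have "(X,p,q X) \<in> L" using that by (auto simp: L_def)
    then have "g (X,p,q X) \<in> Nb (X,p,q X)" using gN by blast
    then show ?thesis using that(3) by (auto simp: Nb_def)
  qed
  show ?thesis
  proof (intro exI conjI ballI)
    show "valid_schedule S \<sigma>" by (rule valid)
  next
    fix X assume X: "X \<in> S"
    define cnt where "cnt P = card {t\<in>{P*tau X..<P*tau X+tau X}. \<sigma> t = Some X}" for P
    have cntK: "card {k. k \<le> q X \<and> isl (g (X,p,k))} \<le> cnt (f * m X + p)" if p: "p < m X" for f p
    proof -
      define K where "K = {k. k \<le> q X \<and> isl (g (X,p,k))}"
      define \<phi> where "\<phi> k = f * T + projl (g (X,p,k))" for k
      have KL: "(X,p,k) \<in> L" if "k \<in> K" for k using that X p by (auto simp: K_def L_def)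
      have "inj_on \<phi> K"
      proof (rule inj_onI)
        fix k1 k2 assume k: "k1 \<in> K" "k2 \<in> K" "\<phi> k1 = \<phi> k2"
        then have "g (X,p,k1) = g (X,p,k2)" by (auto simp: \<phi>_def K_def intro: sum.expand)
        then show "k1 = k2" using ginj KL[OF k(1)] KL[OF k(2)] by (auto simp: inj_on_def)
      qed
      moreover have "\<phi> ` K \<subseteq> {t\<in>{(f * m X + p)*tau X..<(f * m X + p)*tau X+tau X}. \<sigma> t = Some X}"
      proof
        fix x assume "x \<in> \<phi> ` K"
        then obtain k where k: "k \<in> K" and x: "x = \<phi> k" by blast
        define t0 where "t0 = projl (g (X,p,k))"
        have gt: "g (X,p,k) = Inl t0" using k by (auto simp: K_def t0_def)
        have iv: "p * tau X \<le> t0 \<and> t0 < p * tau X + tau X" using gIv[OF KL[OF k] gt] .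
        have "p * tau X + tau X \<le> m X * tau X" using p by (metis add.commute mult_Suc less_eq_Suc_le mult_le_mono1)
        then have t0T: "t0 < T" using iv mT[OF X] by simp
        have xe: "x = f * T + t0" by (simp add: x \<phi>_def t0_def)
        have "\<sigma> x = Some X" using sig0[OF KL[OF k] gt] t0T by (simp add: \<sigma>_def xe)
        moreover have "(f * m X + p) * tau X = f * T + p * tau X"
          using mT[OF X] by (simp add: algebra_simps)
        ultimately show "x \<in> {t\<in>{(f * m X + p)*tau X..<(f * m X + p)*tau X+tau X}. \<sigma> t = Some X}"
          using iv xe by auto
      qed
      ultimately have "card K \<le> card {t\<in>{(f * m X + p)*tau X..<(f * m X + p)*tau X+tau X}. \<sigma> t = Some X}"
        by (intro card_inj_on_le) auto
      then show ?thesis by (simp add: K_def cnt_def)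
    qed
    have qK: "{..<q X} \<subseteq> {k. k \<le> q X \<and> isl (g (X,p,k))}" if pp: "p < m X" for p
    proof
      fix k assume "k \<in> {..<q X}"
      then obtain t where "g (X,p,k) = Inl t" using gInl[OF X pp] by auto
      then show "k \<in> {k. k \<le> q X \<and> isl (g (X,p,k))}" using \<open>k \<in> {..<q X}\<close> by simp
    qed
    have cq: "\<forall>f p. p < m X \<longrightarrow> NN X div m X \<le> cnt (f*m X+p) \<and> cnt (f*m X+p) \<le> tau X"
    proof (intro allI impI conjI)
      fix f p assume p: "p < m X"
      have "q X \<le> card {k. k \<le> q X \<and> isl (g (X,p,k))}"
        using card_mono[OF _ qK[OF p]] by simp
      then show "NN X div m X \<le> cnt (f*m X+p)" using cntK[OF p, of f] by (simp add: q_def)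
      show "cnt (f*m X+p) \<le> tau X" unfolding cnt_def
        by (rule order_trans[OF card_mono[where B = "{(f*m X+p)*tau X..<(f*m X+p)*tau X+tau X}"]]) auto
    qed
    have cs: "\<forall>f. NN X mod m X \<le> card {p. p < m X \<and> NN X div m X < cnt (f*m X+p)}"
    proof
      fix f
      define A where "A = {p. p < m X \<and> isl (g (X,p,q X))}"
      define Bc where "Bc = {p. p < m X \<and> \<not> isl (g (X,p,q X))}"
      have "A \<subseteq> {p. p < m X \<and> NN X div m X < cnt (f*m X+p)}"
      proof
        fix p assume "p \<in> A"
        then have p: "p < m X" and i: "isl (g (X,p,q X))" by (auto simp: A_def)
        have "{..q X} \<subseteq> {k. k \<le> q X \<and> isl (g (X,p,k))}" using qK[OF p] i by (auto simp: le_less)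
        then have "Suc (q X) \<le> card {k. k \<le> q X \<and> isl (g (X,p,k))}"
          using card_mono[of "{k. k \<le> q X \<and> isl (g (X,p,k))}" "{..q X}"] by simp
        then show "p \<in> {p. p < m X \<and> NN X div m X < cnt (f*m X+p)}"
          using cntK[OF p, of f] p by (simp add: q_def)
      qed
      then have cA: "card A \<le> card {p. p < m X \<and> NN X div m X < cnt (f*m X+p)}"
        by (intro card_mono) auto
      have "inj_on (\<lambda>p. g (X,p,q X)) Bc"
      proof (rule inj_onI)
        fix p1 p2 assume h: "p1 \<in> Bc" "p2 \<in> Bc" "g (X,p1,q X) = g (X,p2,q X)"
        have "(X,p1,q X) \<in> L" "(X,p2,q X) \<in> L" using h X by (auto simp: Bc_def L_def)
        then show "p1 = p2" using inj_onD[OF ginj h(3)] by simp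
      qed
      moreover have "(\<lambda>p. g (X,p,q X)) ` Bc \<subseteq> Inr ` ({X} \<times> {..<m X - s X})"
        using gInr[OF X] by (auto simp: Bc_def)
      ultimately have "card Bc \<le> card (Inr ` ({X} \<times> {..<m X - s X}) :: (nat + 'a \<times> nat) set)"
        by (intro card_inj_on_le) auto
      also have "\<dots> \<le> m X - s X" using card_image_le[of "{X} \<times> {..<m X - s X}" Inr] by simp
      finally have cB: "card Bc \<le> m X - s X" .
      have "A \<union> Bc = {..<m X}" "A \<inter> Bc = {}" by (auto simp: A_def Bc_def)
      then have "card A + card Bc = m X" by (metis card_Un_disjoint card_lessThan finite_Un finite_lessThan)
      then have "s X \<le> card A" using cB sm[OF X] by linarith
      then show "NN X mod m X \<le> card {p. p < m X \<and> NN X div m X < cnt (f*m X+p)}"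
        using cA by (simp add: s_def)
    qed
    define G where "G = (\<Sum>i=1..tau X. real (n X i) * r X i)"
    have fr: "\<forall>k. real k * G \<le> total_reward tau r \<sigma> X (k*T)"
    proof
      fix k
      show "real k * G \<le> total_reward tau r \<sigma> X (k*T)" unfolding G_def
        by (rule total_frames[where m = "m X" and cnt = cnt and NN = "NN X"])
           (use tpos X mT[OF X] mpos[OF X] mono nonneg nb[OF X] cq cs in \<open>simp_all add: NN_def cnt_def\<close>)
    qed
    have G0: "G \<ge> 0" unfolding G_def using nonneg X by (intro sum_nonneg) auto
    have sn: "0 \<le> slot_reward tau r \<sigma> X t" for t
      by (rule slot_reward_nonneg) (use tpos nonneg X in auto)
    have mon: "\<forall>a b. a \<le> b \<longrightarrow> total_reward tau r \<sigma> X a \<le> total_reward tau r \<sigma> X b"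
    proof (intro allI impI)
      fix a b :: nat assume "a \<le> b"
      then show "total_reward tau r \<sigma> X a \<le> total_reward tau r \<sigma> X b"
        unfolding total_reward_def
        by (intro sum_mono2) (use sn in auto)
    qed
    have "ereal G \<le> liminf (\<lambda>t. ereal (total_reward tau r \<sigma> X t / (real t / real T)))"
      by (rule liminf_bound[OF Tpos G0 fr mon])
    then show "ereal (\<Sum>i=1..tau X. real (n X i) * r X i) \<le> avg_reward S tau r \<sigma> X"
      by (simp add: avg_reward_def G_def T_def)
  qed
qed

end
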